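(* Let $J$ be a Jordan algebra with unit element $1$ over a field $F$ of characteristic $\neq 2,3$, and let $d$ be a derivation with invertible values of $J$. Let $M$ be the sum of all ideals of $J$ contained in $\ker(d)$. Then $M$ is the largest proper ideal of $J$ (it contains every proper ideal of $J$), the map $\bar d: J/M \to J/M$, $\bar d(j+M) = d(j)+M$, is a well-defined derivation with invertible values of $J/M$, and $J/M$ is a simple Jordan algebra (its only ideals are $0$ and $J/M$).
   Context: A Jordan algebra is a commutative algebra satisfying $(x^2,y,x)=0$, where $(a,b,c)=(ab)c-a(bc)$. In a Jordan algebra $J$ with unit $1$, an element $x$ is invertible if there exists $y \in J$ with $xy = 1$ and $x^2 y = x$. A derivation with invertible values of $J$ is a nonzero derivation $d$ of $J$ such that for every $x \in J$, $d(x)$ is either invertible or equal to $0$. *)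

theory Defs
  imports Main
begin

record ('f, 'a) alg =
  carrier :: "'a set"
  add :: "'a \<Rightarrow> 'a \<Rightarrow> 'a"
  zero :: "'a"
  neg :: "'a \<Rightarrow> 'a"
  smul :: "'f \<Rightarrow> 'a \<Rightarrow> 'a"
  mul :: "'a \<Rightarrow> 'a \<Rightarrow> 'a"
  one :: "'a"

definition algebra_over :: "('f::field, 'a) alg \<Rightarrow> bool" where
  "algebra_over A \<longleftrightarrow>
     zero A \<in> carrier A \<and> one A \<in> carrier A \<and>
     (\<forall>x\<in>carrier A. \<forall>y\<in>carrier A. add A x y \<in> carrier A \<and> mul A x y \<in> carrier A) \<and>
     (\<forall>x\<in>carrier A. neg A x \<in> carrier A) \<and>
     (\<forall>c. \<forall>x\<in>carrier A. smul A c x \<in> carrier A) \<and>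
     (\<forall>x\<in>carrier A. \<forall>y\<in>carrier A. \<forall>z\<in>carrier A. add A (add A x y) z = add A x (add A y z)) \<and>
     (\<forall>x\<in>carrier A. \<forall>y\<in>carrier A. add A x y = add A y x) \<and>
     (\<forall>x\<in>carrier A. add A (zero A) x = x) \<and>
     (\<forall>x\<in>carrier A. add A (neg A x) x = zero A) \<and>
     (\<forall>a. \<forall>x\<in>carrier A. \<forall>y\<in>carrier A. smul A a (add A x y) = add A (smul A a x) (smul A a y)) \<and>
     (\<forall>a b. \<forall>x\<in>carrier A. smul A (a + b) x = add A (smul A a x) (smul A b x)) \<and>
     (\<forall>a b. \<forall>x\<in>carrier A. smul A a (smul A b x) = smul A (a * b) x) \<and>
     (\<forall>x\<in>carrier A. smul A 1 x = x) \<and>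
     (\<forall>x\<in>carrier A. \<forall>y\<in>carrier A. \<forall>z\<in>carrier A.
        mul A (add A x y) z = add A (mul A x z) (mul A y z) \<and>
        mul A x (add A y z) = add A (mul A x y) (mul A x z)) \<and>
     (\<forall>a. \<forall>x\<in>carrier A. \<forall>y\<in>carrier A.
        mul A (smul A a x) y = smul A a (mul A x y) \<and> mul A x (smul A a y) = smul A a (mul A x y))"

definition unital_jordan_algebra :: "('f::field, 'a) alg \<Rightarrow> bool" where
  "unital_jordan_algebra A \<longleftrightarrow> algebra_over A \<and>
     (\<forall>x\<in>carrier A. \<forall>y\<in>carrier A. mul A x y = mul A y x) \<and>
     (\<forall>x\<in>carrier A. \<forall>y\<in>carrier A.
        mul A (mul A (mul A x x) y) x = mul A (mul A x x) (mul A y x)) \<and>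
     (\<forall>x\<in>carrier A. mul A (one A) x = x)"

definition ideal :: "('f::field, 'a) alg \<Rightarrow> 'a set \<Rightarrow> bool" where
  "ideal A I \<longleftrightarrow> I \<subseteq> carrier A \<and> zero A \<in> I \<and>
     (\<forall>x\<in>I. \<forall>y\<in>I. add A x y \<in> I) \<and>
     (\<forall>c. \<forall>x\<in>I. smul A c x \<in> I) \<and>
     (\<forall>x\<in>I. \<forall>y\<in>carrier A. mul A x y \<in> I \<and> mul A y x \<in> I)"

definition invertible :: "('f::field, 'a) alg \<Rightarrow> 'a \<Rightarrow> bool" where
  "invertible A x \<longleftrightarrow> x \<in> carrier A \<and>
     (\<exists>y\<in>carrier A. mul A x y = one A \<and> mul A (mul A x x) y = x)"

definition derivation :: "('f::field, 'a) alg \<Rightarrow> ('a \<Rightarrow> 'a) \<Rightarrow> bool" where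
  "derivation A d \<longleftrightarrow>
     (\<forall>x\<in>carrier A. d x \<in> carrier A) \<and>
     (\<forall>x\<in>carrier A. \<forall>y\<in>carrier A. d (add A x y) = add A (d x) (d y)) \<and>
     (\<forall>c. \<forall>x\<in>carrier A. d (smul A c x) = smul A c (d x)) \<and>
     (\<forall>x\<in>carrier A. \<forall>y\<in>carrier A. d (mul A x y) = add A (mul A (d x) y) (mul A x (d y)))"

definition derivation_inv_values :: "('f::field, 'a) alg \<Rightarrow> ('a \<Rightarrow> 'a) \<Rightarrow> bool" where
  "derivation_inv_values A d \<longleftrightarrow> derivation A d \<and>
     (\<exists>x\<in>carrier A. d x \<noteq> zero A) \<and>
     (\<forall>x\<in>carrier A. invertible A (d x) \<or> d x = zero A)"

definition ker :: "('f, 'a) alg \<Rightarrow> ('a \<Rightarrow> 'a) \<Rightarrow> 'a set" where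
  "ker A d = {x \<in> carrier A. d x = zero A}"

inductive_set ideal_sum :: "('f, 'a) alg \<Rightarrow> 'a set set \<Rightarrow> 'a set"
  for A :: "('f, 'a) alg" and S :: "'a set set" where
  zero_in: "zero A \<in> ideal_sum A S"
| add_in: "I \<in> S \<Longrightarrow> x \<in> I \<Longrightarrow> y \<in> ideal_sum A S \<Longrightarrow> add A x y \<in> ideal_sum A S"

definition simple_algebra :: "('f::field, 'a) alg \<Rightarrow> bool" where
  "simple_algebra A \<longleftrightarrow> carrier A \<noteq> {zero A} \<and>
     (\<forall>I. ideal A I \<longrightarrow> I = {zero A} \<or> I = carrier A)"

text \<open>Quotient algebra by a subset M (meaningful when M is an ideal): cosets,
  operations computed on chosen representatives.\<close>
definition coset :: "('f, 'a) alg \<Rightarrow> 'a set \<Rightarrow> 'a \<Rightarrow> 'a set" where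
  "coset A M a = {add A a m | m. m \<in> M}"

definition rep :: "'a set \<Rightarrow> 'a" where
  "rep X = (SOME x. x \<in> X)"

definition quot_alg :: "('f, 'a) alg \<Rightarrow> 'a set \<Rightarrow> ('f, 'a set) alg" where
  "quot_alg A M =
    \<lparr> carrier = coset A M ` carrier A,
      add = (\<lambda>X Y. coset A M (add A (rep X) (rep Y))),
      zero = coset A M (zero A),
      neg = (\<lambda>X. coset A M (neg A (rep X))),
      smul = (\<lambda>c X. coset A M (smul A c (rep X))),
      mul = (\<lambda>X Y. coset A M (mul A (rep X) (rep Y))),
      one = coset A M (one A) \<rparr>"

definition quot_map :: "('f, 'a) alg \<Rightarrow> 'a set \<Rightarrow> ('a \<Rightarrow> 'a) \<Rightarrow> 'a set \<Rightarrow> 'a set" where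
  "quot_map A M d = (\<lambda>X. coset A M (d (rep X)))"

end

theory Submission
  imports Defs
begin


locale jalg =
  fixes A :: "('f::field, 'a) alg"
  assumes alg: "algebra_over A"
begin

lemma zero_c[simp]: "zero A \<in> carrier A" using alg unfolding algebra_over_def by metis
lemma one_c[simp]: "one A \<in> carrier A" using alg unfolding algebra_over_def by metis
lemma add_c[simp]: "x \<in> carrier A \<Longrightarrow> y \<in> carrier A \<Longrightarrow> add A x y \<in> carrier A"
  using alg unfolding algebra_over_def by metis
lemma mul_c[simp]: "x \<in> carrier A \<Longrightarrow> y \<in> carrier A \<Longrightarrow> mul A x y \<in> carrier A"
  using alg unfolding algebra_over_def by metis
lemma neg_c[simp]: "x \<in> carrier A \<Longrightarrow> neg A x \<in> carrier A"
  using alg unfolding algebra_over_def by metis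
lemma smul_c[simp]: "x \<in> carrier A \<Longrightarrow> smul A c x \<in> carrier A"
  using alg unfolding algebra_over_def by metis
lemma add_assoc: "x \<in> carrier A \<Longrightarrow> y \<in> carrier A \<Longrightarrow> z \<in> carrier A \<Longrightarrow>
   add A (add A x y) z = add A x (add A y z)"
  using alg unfolding algebra_over_def by metis
lemma add_comm: "x \<in> carrier A \<Longrightarrow> y \<in> carrier A \<Longrightarrow> add A x y = add A y x"
  using alg unfolding algebra_over_def by metis
lemma add_zero_l[simp]: "x \<in> carrier A \<Longrightarrow> add A (zero A) x = x"
  using alg unfolding algebra_over_def by metis
lemma neg_l[simp]: "x \<in> carrier A \<Longrightarrow> add A (neg A x) x = zero A"
  using alg unfolding algebra_over_def by metis
lemma smul_add: "x \<in> carrier A \<Longrightarrow> y \<in> carrier A \<Longrightarrow> smul A c (add A x y) = add A (smul A c x) (smul A c y)"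
  using alg unfolding algebra_over_def by metis
lemma add_smul: "x \<in> carrier A \<Longrightarrow> smul A (a + b) x = add A (smul A a x) (smul A b x)"
  using alg unfolding algebra_over_def by metis
lemma smul_smul[simp]: "x \<in> carrier A \<Longrightarrow> smul A a (smul A b x) = smul A (a * b) x"
  using alg unfolding algebra_over_def by metis
lemma smul_one[simp]: "x \<in> carrier A \<Longrightarrow> smul A 1 x = x"
  using alg unfolding algebra_over_def by metis
lemma distr_r: "x \<in> carrier A \<Longrightarrow> y \<in> carrier A \<Longrightarrow> z \<in> carrier A \<Longrightarrow>
   mul A (add A x y) z = add A (mul A x z) (mul A y z)"
  using alg unfolding algebra_over_def by metis
lemma distr_l: "x \<in> carrier A \<Longrightarrow> y \<in> carrier A \<Longrightarrow> z \<in> carrier A \<Longrightarrow>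
   mul A x (add A y z) = add A (mul A x y) (mul A x z)"
  using alg unfolding algebra_over_def by metis
lemma mul_smul_l: "x \<in> carrier A \<Longrightarrow> y \<in> carrier A \<Longrightarrow> mul A (smul A a x) y = smul A a (mul A x y)"
  using alg unfolding algebra_over_def by metis
lemma mul_smul_r: "x \<in> carrier A \<Longrightarrow> y \<in> carrier A \<Longrightarrow> mul A x (smul A a y) = smul A a (mul A x y)"
  using alg unfolding algebra_over_def by metis

lemma add_zero_r[simp]: "x \<in> carrier A \<Longrightarrow> add A x (zero A) = x"
  using add_comm add_zero_l by simp
lemma neg_r[simp]: "x \<in> carrier A \<Longrightarrow> add A x (neg A x) = zero A"
  using add_comm neg_l by simp

lemma cancel:
  assumes "x \<in> carrier A" "y \<in> carrier A" "z \<in> carrier A" "add A x y = add A x z"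
  shows "y = z"
proof -
  have "y = add A (add A (neg A x) x) y" using assms by simp
  also have "\<dots> = add A (neg A x) (add A x y)" using assms by (simp only: add_assoc neg_c)
  also have "\<dots> = add A (neg A x) (add A x z)" using assms by simp
  also have "\<dots> = add A (add A (neg A x) x) z" using assms by (simp only: add_assoc neg_c)
  also have "\<dots> = z" using assms by simp
  finally show ?thesis .
qed

lemma zero_neg: "p \<in> carrier A \<Longrightarrow> q \<in> carrier A \<Longrightarrow> add A p q = zero A \<Longrightarrow> q = neg A p"
  by (metis cancel neg_c neg_r)

lemma smul_0f[simp]: "x \<in> carrier A \<Longrightarrow> smul A 0 x = zero A"
  by (metis add_smul add_zero_r add_0 cancel smul_c zero_c)

lemma smul_m1: "x \<in> carrier A \<Longrightarrow> smul A (-1) x = neg A x"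
proof -
  assume x: "x \<in> carrier A"
  have "add A x (smul A (-1) x) = add A (smul A 1 x) (smul A (-1) x)" using x by simp
  also have "\<dots> = smul A (1 + -1) x" using x by (simp only: add_smul)
  finally have "add A x (smul A (-1) x) = zero A" using x by simp
  then show ?thesis using x zero_neg by simp
qed

lemma smul_0[simp]: "smul A c (zero A) = zero A"
  by (metis add_zero_r cancel smul_add smul_c zero_c)

lemma mul_0l[simp]: "x \<in> carrier A \<Longrightarrow> mul A (zero A) x = zero A"
  by (metis add_zero_r cancel distr_r mul_c zero_c add_zero_l)
lemma mul_0r[simp]: "x \<in> carrier A \<Longrightarrow> mul A x (zero A) = zero A"
  by (metis add_zero_r cancel distr_l mul_c zero_c add_zero_l)

lemma two: "w \<in> carrier A \<Longrightarrow> add A w w = smul A 2 w"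
  by (metis add_smul one_add_one smul_one)

lemma neg_add: "a \<in> carrier A \<Longrightarrow> b \<in> carrier A \<Longrightarrow> neg A (add A a b) = add A (neg A a) (neg A b)"
  by (metis smul_add smul_m1 add_c)

lemma add4: "a \<in> carrier A \<Longrightarrow> b \<in> carrier A \<Longrightarrow> m \<in> carrier A \<Longrightarrow> n \<in> carrier A \<Longrightarrow>
  add A (add A a m) (add A b n) = add A (add A a b) (add A m n)"
  by (metis add_assoc add_c add_comm)


lemma ideal_sub: "ideal A I \<Longrightarrow> x \<in> I \<Longrightarrow> x \<in> carrier A" unfolding ideal_def by blast
lemma ideal_zero: "ideal A I \<Longrightarrow> zero A \<in> I" unfolding ideal_def by blast
lemma ideal_add: "ideal A I \<Longrightarrow> x \<in> I \<Longrightarrow> y \<in> I \<Longrightarrow> add A x y \<in> I" unfolding ideal_def by blast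
lemma ideal_smul: "ideal A I \<Longrightarrow> x \<in> I \<Longrightarrow> smul A c x \<in> I" unfolding ideal_def by blast
lemma ideal_mul_l: "ideal A I \<Longrightarrow> x \<in> I \<Longrightarrow> y \<in> carrier A \<Longrightarrow> mul A x y \<in> I" unfolding ideal_def by blast
lemma ideal_mul_r: "ideal A I \<Longrightarrow> x \<in> I \<Longrightarrow> y \<in> carrier A \<Longrightarrow> mul A y x \<in> I" unfolding ideal_def by blast
lemma ideal_neg: "ideal A I \<Longrightarrow> x \<in> I \<Longrightarrow> neg A x \<in> I"
  by (metis ideal_smul ideal_sub smul_m1)

lemma ideal_one: "ideal A I \<Longrightarrow> one A \<in> I \<Longrightarrow> \<forall>x\<in>carrier A. mul A (one A) x = x \<Longrightarrow> I = carrier A"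
  using ideal_mul_l[of I "one A"] ideal_sub[of I] by auto

lemma ideal_inv: "ideal A I \<Longrightarrow> u \<in> I \<Longrightarrow> invertible A u \<Longrightarrow> \<forall>x\<in>carrier A. mul A (one A) x = x \<Longrightarrow> I = carrier A"
  unfolding invertible_def using ideal_mul_l[of I u] ideal_one[of I] ideal_sub[of I] by metis

lemma isum_sub:
  assumes "\<forall>I\<in>S. ideal A I" "x \<in> ideal_sum A S" shows "x \<in> carrier A"
  using assms(2) by induct (use assms(1) ideal_sub in auto)

lemma isum_add:
  assumes "\<forall>I\<in>S. ideal A I" "x \<in> ideal_sum A S" "y \<in> ideal_sum A S"
  shows "add A x y \<in> ideal_sum A S"
  using assms(2)
proof induct
  case zero_in then show ?case using assms isum_sub by simp
next
  case (add_in I u v)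
  have u: "u \<in> carrier A" using add_in(1,2) assms(1) ideal_sub by blast
  have v: "v \<in> carrier A" using add_in(3) isum_sub assms(1) by blast
  have "y \<in> carrier A" using assms(3) isum_sub assms(1) by blast
  then have "add A (add A u v) y = add A u (add A v y)"
    using u v by (simp add: add_assoc)
  moreover have "add A v y \<in> ideal_sum A S" using add_in(4) .
  ultimately show ?case using ideal_sum.add_in[OF add_in(1,2)] by simp
qed

lemma isum_smul:
  assumes "\<forall>I\<in>S. ideal A I" "x \<in> ideal_sum A S"
  shows "smul A c x \<in> ideal_sum A S"
  using assms(2)
proof induct
  case zero_in then show ?case by (simp add: ideal_sum.zero_in)
next
  case (add_in I u v)
  have u: "u \<in> carrier A" using add_in(1,2) assms(1) ideal_sub by blast
  have v: "v \<in> carrier A" using add_in(3) isum_sub assms(1) by blast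
  have "smul A c (add A u v) = add A (smul A c u) (smul A c v)"
    using u v by (simp add: smul_add)
  moreover have "smul A c u \<in> I" using add_in assms ideal_smul by auto
  ultimately show ?case using ideal_sum.add_in[OF add_in(1)] add_in(4) by simp
qed

lemma isum_mul:
  assumes "\<forall>I\<in>S. ideal A I" "x \<in> ideal_sum A S" "y \<in> carrier A"
  shows "mul A x y \<in> ideal_sum A S \<and> mul A y x \<in> ideal_sum A S"
  using assms(2)
proof induct
  case zero_in then show ?case using assms by (simp add: ideal_sum.zero_in)
next
  case (add_in I u v)
  have u: "u \<in> carrier A" using add_in(1,2) assms(1) ideal_sub by blast
  have v: "v \<in> carrier A" using add_in(3) isum_sub assms(1) by blast
  have "mul A (add A u v) y = add A (mul A u y) (mul A v y)"
    using u v assms(3) by (simp add: distr_r)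
  moreover have "mul A y (add A u v) = add A (mul A y u) (mul A y v)"
    using u v assms(3) by (simp add: distr_l)
  moreover have "mul A u y \<in> I" "mul A y u \<in> I" using add_in assms ideal_mul_l ideal_mul_r by auto
  moreover have "add A (mul A u y) (mul A v y) \<in> ideal_sum A S"
    by (rule ideal_sum.add_in[OF add_in(1)]) (use calculation add_in(4) in auto)
  moreover have "add A (mul A y u) (mul A y v) \<in> ideal_sum A S"
    by (rule ideal_sum.add_in[OF add_in(1)]) (use calculation add_in(4) in auto)
  ultimately show ?case by simp
qed

lemma isum_ideal: "\<forall>I\<in>S. ideal A I \<Longrightarrow> ideal A (ideal_sum A S)"
  unfolding ideal_def[of A "ideal_sum A S"]
  apply (intro conjI ballI allI subsetI)
  using isum_sub apply blast
  apply (rule ideal_sum.zero_in)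
  using isum_add apply blast
  using isum_smul apply blast
  using isum_mul apply blast
  using isum_mul apply blast
  done

lemma isum_upper: "I \<in> S \<Longrightarrow> ideal A I \<Longrightarrow> I \<subseteq> ideal_sum A S"
proof
  fix x assume "I \<in> S" "ideal A I" "x \<in> I"
  then have "add A x (zero A) \<in> ideal_sum A S" by (intro ideal_sum.add_in ideal_sum.zero_in)
  then show "x \<in> ideal_sum A S" using \<open>ideal A I\<close> \<open>x \<in> I\<close> ideal_sub by simp
qed

lemma isum_least:
  assumes "\<forall>I\<in>S. I \<subseteq> K" "zero A \<in> K" "\<forall>x\<in>K. \<forall>y\<in>K. add A x y \<in> K" "x \<in> ideal_sum A S"
  shows "x \<in> K"
  using assms(4) by induct (use assms in auto)

end



locale jq = jalg A for A :: "('f::field, 'a) alg" +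
  fixes M :: "'a set"
  assumes idl: "ideal A M"
begin

lemma M_c: "m \<in> M \<Longrightarrow> m \<in> carrier A" using idl ideal_sub by blast

lemma coset_sub: "a \<in> carrier A \<Longrightarrow> coset A M a \<subseteq> carrier A"
  unfolding coset_def using M_c by force

lemma self_in: "a \<in> carrier A \<Longrightarrow> a \<in> coset A M a"
proof -
  assume a: "a \<in> carrier A"
  have "add A a (zero A) \<in> coset A M a" unfolding coset_def using idl ideal_zero by blast
  then show ?thesis using a by simp
qed

lemma coset_eq:
  assumes a: "a \<in> carrier A" and x: "x \<in> coset A M a"
  shows "coset A M x = coset A M a"
proof -
  obtain m where m: "m \<in> M" "x = add A a m" using x unfolding coset_def by blast
  have mc: "m \<in> carrier A" using m M_c by blast
  show ?thesis
  proof
    show "coset A M x \<subseteq> coset A M a"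
    proof
      fix z assume "z \<in> coset A M x"
      then obtain n where n: "n \<in> M" "z = add A x n" unfolding coset_def by blast
      have "z = add A a (add A m n)" using n m a mc M_c by (simp add: add_assoc)
      moreover have "add A m n \<in> M" using idl ideal_add m n by blast
      ultimately show "z \<in> coset A M a" unfolding coset_def by blast
    qed
  next
    show "coset A M a \<subseteq> coset A M x"
    proof
      fix z assume "z \<in> coset A M a"
      then obtain n where n: "n \<in> M" "z = add A a n" unfolding coset_def by blast
      have nc: "n \<in> carrier A" using n M_c by blast
      have "add A x (add A (neg A m) n) = add A a (add A m (add A (neg A m) n))"
        using m a mc nc by (simp add: add_assoc)
      also have "\<dots> = add A a n" using mc nc by (simp flip: add_assoc)
      finally have "z = add A x (add A (neg A m) n)" using n by simp
      moreover have "add A (neg A m) n \<in> M" using idl ideal_add ideal_neg m n by blast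
      ultimately show "z \<in> coset A M x" unfolding coset_def by blast
    qed
  qed
qed

lemma rep_in: "a \<in> carrier A \<Longrightarrow> rep (coset A M a) \<in> coset A M a"
  unfolding rep_def using self_in by (rule someI)

lemma coset_eq_iff: "a \<in> carrier A \<Longrightarrow> b \<in> carrier A \<Longrightarrow> coset A M a = coset A M b \<longleftrightarrow> b \<in> coset A M a"
proof
  assume "a \<in> carrier A" "b \<in> carrier A" "coset A M a = coset A M b"
  then show "b \<in> coset A M a" using self_in by simp
next
  assume "a \<in> carrier A" "b \<in> carrier A" "b \<in> coset A M a"
  then show "coset A M a = coset A M b" using coset_eq[of a b] by auto
qed

lemma coset0: "coset A M (zero A) = M"
proof
  show "coset A M (zero A) \<subseteq> M" unfolding coset_def using M_c by auto
  show "M \<subseteq> coset A M (zero A)"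
  proof
    fix x assume "x \<in> M" then have "add A (zero A) x \<in> coset A M (zero A)" unfolding coset_def by blast
    then show "x \<in> coset A M (zero A)" using M_c \<open>x \<in> M\<close> by simp
  qed
qed

lemma coset_zero_iff: "a \<in> carrier A \<Longrightarrow> coset A M a = coset A M (zero A) \<longleftrightarrow> a \<in> M"
proof
  assume a: "a \<in> carrier A" "coset A M a = coset A M (zero A)"
  then have "a \<in> coset A M (zero A)" using self_in[of a] by simp
  then show "a \<in> M" using coset0 by simp
next
  assume a: "a \<in> carrier A" "a \<in> M"
  then have "a \<in> coset A M (zero A)" using coset0 by simp
  then show "coset A M a = coset A M (zero A)" using coset_eq[of "zero A" a] by simp
qed

lemma mem_cosetE:
  assumes "x \<in> coset A M a" obtains m where "m \<in> M" "x = add A a m"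
  using assms unfolding coset_def by blast

lemma mem_cosetI: "m \<in> M \<Longrightarrow> add A a m \<in> coset A M a"
  unfolding coset_def by blast

lemma q_add[simp]:
  assumes a: "a \<in> carrier A" and b: "b \<in> carrier A"
  shows "add (quot_alg A M) (coset A M a) (coset A M b) = coset A M (add A a b)"
proof -
  obtain m where m: "m \<in> M" "rep (coset A M a) = add A a m" using rep_in[OF a] mem_cosetE by metis
  obtain n where n: "n \<in> M" "rep (coset A M b) = add A b n" using rep_in[OF b] mem_cosetE by metis
  have "add A (rep (coset A M a)) (rep (coset A M b)) = add A (add A a b) (add A m n)"
    using m n a b M_c add4 by simp
  moreover have "add A m n \<in> M" using idl ideal_add m n by blast
  ultimately have h: "add A (rep (coset A M a)) (rep (coset A M b)) \<in> coset A M (add A a b)"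
    using mem_cosetI by simp
  show ?thesis unfolding quot_alg_def using coset_eq[OF _ h] a b by simp
qed

lemma q_mul[simp]:
  assumes a: "a \<in> carrier A" and b: "b \<in> carrier A"
  shows "mul (quot_alg A M) (coset A M a) (coset A M b) = coset A M (mul A a b)"
proof -
  obtain m where m: "m \<in> M" "rep (coset A M a) = add A a m" using rep_in[OF a] mem_cosetE by metis
  obtain n where n: "n \<in> M" "rep (coset A M b) = add A b n" using rep_in[OF b] mem_cosetE by metis
  have mc: "m \<in> carrier A" and nc: "n \<in> carrier A" using m n M_c by auto
  have "mul A (add A a m) (add A b n) = add A (mul A a (add A b n)) (mul A m (add A b n))"
    using a b mc nc by (simp add: distr_r)
  also have "\<dots> = add A (add A (mul A a b) (mul A a n)) (mul A m (add A b n))"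
    using a b mc nc by (simp add: distr_l)
  also have "\<dots> = add A (mul A a b) (add A (mul A a n) (mul A m (add A b n)))"
    using a b mc nc by (simp add: add_assoc)
  finally have eq: "mul A (add A a m) (add A b n) = add A (mul A a b) (add A (mul A a n) (mul A m (add A b n)))" .
  have "mul A a n \<in> M" using idl ideal_mul_r n a by blast
  moreover have "mul A m (add A b n) \<in> M" using idl ideal_mul_l m b nc by simp
  ultimately have "add A (mul A a n) (mul A m (add A b n)) \<in> M" using idl ideal_add by blast
  then have h: "mul A (rep (coset A M a)) (rep (coset A M b)) \<in> coset A M (mul A a b)"
    using mem_cosetI eq m n by simp
  show ?thesis unfolding quot_alg_def using coset_eq[OF _ h] a b by simp
qed

lemma q_smul[simp]:
  assumes a: "a \<in> carrier A"
  shows "smul (quot_alg A M) c (coset A M a) = coset A M (smul A c a)"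
proof -
  obtain m where m: "m \<in> M" "rep (coset A M a) = add A a m" using rep_in[OF a] mem_cosetE by metis
  have "smul A c (rep (coset A M a)) = add A (smul A c a) (smul A c m)"
    using m a M_c smul_add by simp
  moreover have "smul A c m \<in> M" using idl ideal_smul m by blast
  ultimately have h: "smul A c (rep (coset A M a)) \<in> coset A M (smul A c a)"
    using mem_cosetI by simp
  show ?thesis unfolding quot_alg_def using coset_eq[OF _ h] a by simp
qed

lemma q_neg[simp]:
  assumes a: "a \<in> carrier A"
  shows "neg (quot_alg A M) (coset A M a) = coset A M (neg A a)"
proof -
  obtain m where m: "m \<in> M" "rep (coset A M a) = add A a m" using rep_in[OF a] mem_cosetE by metis
  have "neg A (rep (coset A M a)) = add A (neg A a) (neg A m)"
    using m a M_c neg_add by simp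
  moreover have "neg A m \<in> M" using idl ideal_neg m by blast
  ultimately have h: "neg A (rep (coset A M a)) \<in> coset A M (neg A a)"
    using mem_cosetI by simp
  show ?thesis unfolding quot_alg_def using coset_eq[OF _ h] a by simp
qed

lemma q_zero[simp]: "zero (quot_alg A M) = coset A M (zero A)" unfolding quot_alg_def by simp
lemma q_one[simp]: "one (quot_alg A M) = coset A M (one A)" unfolding quot_alg_def by simp
lemma q_carrier[simp]: "carrier (quot_alg A M) = coset A M ` carrier A" unfolding quot_alg_def by simp

lemma coset_img[simp]: "a \<in> carrier A \<Longrightarrow> coset A M a \<in> coset A M ` carrier A"
  by blast

lemma quot_algebra: "algebra_over (quot_alg A M)"
  unfolding algebra_over_def q_carrier ball_simps
  apply (intro conjI)
  apply (simp_all add: add_assoc smul_add add_smul distr_l distr_r mul_smul_l mul_smul_r)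
  apply (metis add_comm)
  done

end



context jalg begin

lemma der_c: "derivation A d \<Longrightarrow> x \<in> carrier A \<Longrightarrow> d x \<in> carrier A"
  unfolding derivation_def by blast
lemma der_add: "derivation A d \<Longrightarrow> x \<in> carrier A \<Longrightarrow> y \<in> carrier A \<Longrightarrow> d (add A x y) = add A (d x) (d y)"
  unfolding derivation_def by blast
lemma der_smul: "derivation A d \<Longrightarrow> x \<in> carrier A \<Longrightarrow> d (smul A c x) = smul A c (d x)"
  unfolding derivation_def by blast
lemma der_mul: "derivation A d \<Longrightarrow> x \<in> carrier A \<Longrightarrow> y \<in> carrier A \<Longrightarrow> d (mul A x y) = add A (mul A (d x) y) (mul A x (d y))"
  unfolding derivation_def by blast
lemma der_0: "derivation A d \<Longrightarrow> d (zero A) = zero A"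
proof -
  assume dd: "derivation A d"
  have "d (zero A) = d (add A (zero A) (zero A))" by simp
  also have "\<dots> = add A (d (zero A)) (d (zero A))" by (rule der_add[OF dd zero_c zero_c])
  finally have "add A (d (zero A)) (zero A) = add A (d (zero A)) (d (zero A))"
    using der_c[OF dd] by simp
  then show ?thesis using cancel der_c[OF dd] by (metis zero_c)
qed

lemma ker_proper:
  assumes comm: "\<forall>x\<in>carrier A. \<forall>y\<in>carrier A. mul A x y = mul A y x"
    and unit: "\<forall>x\<in>carrier A. mul A (one A) x = x"
    and dd: "derivation A d"
    and inv: "\<forall>x\<in>carrier A. invertible A (d x) \<or> d x = zero A"
    and two: "(2::'f) \<noteq> 0"
    and I: "ideal A I" "I \<noteq> carrier A" and x: "x \<in> I"
  shows "d x = zero A"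
proof -
  have xc: "x \<in> carrier A" using I x ideal_sub by blast
  define a where "a = d x"
  have ac: "a \<in> carrier A" using der_c[OF dd xc] a_def by simp
  have noinv: "\<And>u. u \<in> I \<Longrightarrow> invertible A u \<Longrightarrow> False" using ideal_inv[OF I(1)] unit I(2) by blast
  define w where "w = mul A x a"
  have wc: "w \<in> carrier A" using w_def xc ac by simp
  have "d (mul A x x) = add A (mul A a x) (mul A x a)" using der_mul[OF dd xc xc] a_def by simp
  also have "\<dots> = add A w w" using comm xc ac w_def by simp
  finally have dxx: "d (mul A x x) = add A w w" .
  have "w \<in> I" using ideal_mul_l[OF I(1) x ac] w_def by simp
  then have "add A w w \<in> I" using ideal_add[OF I(1)] by blast
  then have "d (mul A x x) = zero A" using dxx inv noinv xc by (metis mul_c)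
  then have "smul A 2 w = zero A" using dxx two[of] wc by (simp add: jalg.two[OF jalg_axioms])
  then have "smul A (1/2) (smul A 2 w) = zero A" by simp
  then have w0: "w = zero A" using wc two by simp
  have ax: "mul A a x = zero A" using w0 w_def comm xc ac by simp
  have "zero A = d (mul A a x)" using ax der_0[OF dd] by simp
  also have "\<dots> = add A (mul A (d a) x) (mul A a a)" using der_mul[OF dd ac xc] a_def by simp
  finally have "mul A a a = neg A (mul A (d a) x)"
    using zero_neg der_c[OF dd ac] xc ac by simp
  moreover have "mul A (d a) x \<in> I" using ideal_mul_r[OF I(1) x] der_c[OF dd ac] by simp
  ultimately have aaI: "mul A a a \<in> I" using ideal_neg[OF I(1)] by simp
  show ?thesis
  proof (rule ccontr)
    assume "d x \<noteq> zero A"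
    then have ia: "invertible A a" using inv xc a_def by blast
    then obtain y where y: "y \<in> carrier A" "mul A (mul A a a) y = a"
      unfolding invertible_def by blast
    then have "a \<in> I" using ideal_mul_l[OF I(1) aaI y(1)] by simp
    then show False using noinv ia by blast
  qed
qed

end



theorem mainTheorem4:
  fixes J :: "('f::field, 'a) alg" and d :: "'a \<Rightarrow> 'a"
  assumes "unital_jordan_algebra J"
    and "(2::'f) \<noteq> 0" and "(3::'f) \<noteq> 0"
    and "derivation_inv_values J d"
  defines "M \<equiv> ideal_sum J {I. ideal J I \<and> I \<subseteq> ker J d}"
  shows "ideal J M \<and> M \<noteq> carrier J \<and>
         (\<forall>I. ideal J I \<and> I \<noteq> carrier J \<longrightarrow> I \<subseteq> M) \<and>
         (\<forall>x\<in>carrier J. \<forall>y\<in>carrier J. coset J M x = coset J M y \<longrightarrow>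
           coset J M (d x) = coset J M (d y)) \<and>
         (\<forall>x\<in>carrier J. quot_map J M d (coset J M x) = coset J M (d x)) \<and>
         derivation_inv_values (quot_alg J M) (quot_map J M d) \<and>
         unital_jordan_algebra (quot_alg J M) \<and> simple_algebra (quot_alg J M)"
proof -
  have alg: "algebra_over J" using assms(1) unfolding unital_jordan_algebra_def by blast
  have comm: "\<forall>x\<in>carrier J. \<forall>y\<in>carrier J. mul J x y = mul J y x"
    using assms(1) unfolding unital_jordan_algebra_def by blast
  have jord: "\<forall>x\<in>carrier J. \<forall>y\<in>carrier J.
        mul J (mul J (mul J x x) y) x = mul J (mul J x x) (mul J y x)"
    using assms(1) unfolding unital_jordan_algebra_def by blast
  have unit: "\<forall>x\<in>carrier J. mul J (one J) x = x"
    using assms(1) unfolding unital_jordan_algebra_def by blast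
  have dd: "derivation J d" using assms(4) unfolding derivation_inv_values_def by blast
  have dnz: "\<exists>x\<in>carrier J. d x \<noteq> zero J" using assms(4) unfolding derivation_inv_values_def by blast
  have inv: "\<forall>x\<in>carrier J. invertible J (d x) \<or> d x = zero J"
    using assms(4) unfolding derivation_inv_values_def by blast
  interpret jalg J by (rule jalg.intro[OF alg])
  define S where "S = {I. ideal J I \<and> I \<subseteq> ker J d}"
  have MS: "M = ideal_sum J S" using M_def S_def by simp
  have Sid: "\<forall>I\<in>S. ideal J I" using S_def by blast
  have Mid: "ideal J M" using isum_ideal[OF Sid] MS by simp
  have Mker: "M \<subseteq> ker J d"
  proof
    fix x assume "x \<in> M"
    then show "x \<in> ker J d" unfolding MS
    proof (rule isum_least[rotated 3])
      show "\<forall>I\<in>S. I \<subseteq> ker J d" using S_def by blast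
      show "zero J \<in> ker J d" unfolding ker_def using der_0[OF dd] by simp
      show "\<forall>x\<in>ker J d. \<forall>y\<in>ker J d. add J x y \<in> ker J d"
        unfolding ker_def using der_add[OF dd] by simp
    qed
  qed
  have Mprop: "M \<noteq> carrier J" using Mker dnz unfolding ker_def by blast
  have Mmax: "\<forall>I. ideal J I \<and> I \<noteq> carrier J \<longrightarrow> I \<subseteq> M"
  proof (intro allI impI)
    fix I assume I: "ideal J I \<and> I \<noteq> carrier J"
    then have "I \<subseteq> ker J d" unfolding ker_def
      using ker_proper[OF comm unit dd inv assms(2)] ideal_sub by blast
    then have "I \<in> S" using S_def I by blast
    then show "I \<subseteq> M" using isum_upper I MS by simp
  qed
  interpret jq J M by (rule jq.intro[OF jalg_axioms]) (simp add: jq_axioms_def Mid)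
  have dM: "\<And>m. m \<in> M \<Longrightarrow> d m = zero J" using Mker unfolding ker_def by blast
  have drep: "\<And>a. a \<in> carrier J \<Longrightarrow> x \<in> coset J M a \<Longrightarrow> d x = d a" for x
  proof -
    fix a assume a: "a \<in> carrier J" and "x \<in> coset J M a"
    obtain m where m: "m \<in> M" "x = add J a m" using \<open>x \<in> coset J M a\<close> by (rule mem_cosetE)
    then show "d x = d a" using der_add[OF dd a M_c[OF m(1)]] dM der_c[OF dd a] by simp
  qed
  have qmap: "\<And>a. a \<in> carrier J \<Longrightarrow> quot_map J M d (coset J M a) = coset J M (d a)"
    unfolding quot_map_def using drep rep_in by simp
  have resp: "\<forall>x\<in>carrier J. \<forall>y\<in>carrier J. coset J M x = coset J M y \<longrightarrow>
           coset J M (d x) = coset J M (d y)"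
    using coset_eq_iff drep by metis
  have dnotM: "\<And>a. a \<in> carrier J \<Longrightarrow> d a \<noteq> zero J \<Longrightarrow> d a \<notin> M"
    using inv ideal_inv[OF Mid _ _ unit] Mprop by blast
  have qder: "derivation (quot_alg J M) (quot_map J M d)"
    unfolding derivation_def q_carrier ball_simps
    using qmap der_c[OF dd] der_add[OF dd] der_smul[OF dd] der_mul[OF dd] by simp
  have qdiv: "derivation_inv_values (quot_alg J M) (quot_map J M d)"
    unfolding derivation_inv_values_def
  proof (intro conjI qder)
    obtain x where x: "x \<in> carrier J" "d x \<noteq> zero J" using dnz by blast
    then have "coset J M (d x) \<noteq> coset J M (zero J)"
      using coset_zero_iff dnotM der_c[OF dd] by simp
    then show "\<exists>X\<in>carrier (quot_alg J M). quot_map J M d X \<noteq> zero (quot_alg J M)"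
      using x qmap by force
    show "\<forall>X\<in>carrier (quot_alg J M). invertible (quot_alg J M) (quot_map J M d X) \<or>
        quot_map J M d X = zero (quot_alg J M)"
      unfolding q_carrier ball_simps
    proof
      fix a assume a: "a \<in> carrier J"
      show "invertible (quot_alg J M) (quot_map J M d (coset J M a)) \<or>
        quot_map J M d (coset J M a) = zero (quot_alg J M)"
      proof (cases "d a = zero J")
        case True then show ?thesis using qmap a by simp
      next
        case False
        then have "invertible J (d a)" using inv a by blast
        then obtain y where y: "y \<in> carrier J" "mul J (d a) y = one J" "mul J (mul J (d a) (d a)) y = d a"
          unfolding invertible_def by blast
        have da: "d a \<in> carrier J" using der_c[OF dd a] .
        have "coset J M y \<in> carrier (quot_alg J M)" using y by simp
        moreover have "mul (quot_alg J M) (coset J M (d a)) (coset J M y) = one (quot_alg J M)"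
          using y da by simp
        moreover have "mul (quot_alg J M) (mul (quot_alg J M) (coset J M (d a)) (coset J M (d a))) (coset J M y) = coset J M (d a)"
          using y da by simp
        moreover have "coset J M (d a) \<in> carrier (quot_alg J M)" using da by simp
        ultimately have "invertible (quot_alg J M) (coset J M (d a))"
          unfolding invertible_def by blast
        then show ?thesis using qmap a by simp
      qed
    qed
  qed
  have qjord: "unital_jordan_algebra (quot_alg J M)"
    unfolding unital_jordan_algebra_def q_carrier ball_simps
    using quot_algebra comm jord unit by simp
  have qsimple: "simple_algebra (quot_alg J M)"
    unfolding simple_algebra_def
  proof (intro conjI allI impI)
    have "one J \<notin> M" using ideal_one[OF Mid _ unit] Mprop by blast
    then have "coset J M (one J) \<noteq> coset J M (zero J)" using coset_zero_iff by simp
    moreover have "coset J M (one J) \<in> carrier (quot_alg J M)" by simp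
    ultimately show "carrier (quot_alg J M) \<noteq> {zero (quot_alg J M)}" by (metis q_zero singletonD)
  next
    fix K assume K: "ideal (quot_alg J M) K"
    define I where "I = {a \<in> carrier J. coset J M a \<in> K}"
    have Ksub: "K \<subseteq> coset J M ` carrier J" using K unfolding ideal_def by simp
    have KQ: "\<And>X c. X \<in> K \<Longrightarrow> Y \<in> K \<Longrightarrow> add (quot_alg J M) X Y \<in> K \<and> smul (quot_alg J M) c X \<in> K"
      for Y using K unfolding ideal_def by blast
    have KM: "\<And>X Y. X \<in> K \<Longrightarrow> Y \<in> carrier (quot_alg J M) \<Longrightarrow> mul (quot_alg J M) X Y \<in> K \<and> mul (quot_alg J M) Y X \<in> K"
      using K unfolding ideal_def by blast
    have K0: "zero (quot_alg J M) \<in> K" using K unfolding ideal_def by blast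
    have Iid: "ideal J I"
      unfolding ideal_def I_def
    proof (intro conjI ballI allI)
      show "{a \<in> carrier J. coset J M a \<in> K} \<subseteq> carrier J" by blast
      show "zero J \<in> {a \<in> carrier J. coset J M a \<in> K}" using K0 by simp
    next
      fix x y assume "x \<in> {a \<in> carrier J. coset J M a \<in> K}" "y \<in> {a \<in> carrier J. coset J M a \<in> K}"
      then show "add J x y \<in> {a \<in> carrier J. coset J M a \<in> K}" using KQ[of "coset J M x" "coset J M y"] by simp
    next
      fix c x assume "x \<in> {a \<in> carrier J. coset J M a \<in> K}"
      then show "smul J c x \<in> {a \<in> carrier J. coset J M a \<in> K}" using KQ[of "coset J M x" "coset J M x" c] by simp
    next
      fix x y assume "x \<in> {a \<in> carrier J. coset J M a \<in> K}" "y \<in> carrier J"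
      then show "mul J x y \<in> {a \<in> carrier J. coset J M a \<in> K}"
        using KM[of "coset J M x" "coset J M y"] by simp
    next
      fix x y assume "x \<in> {a \<in> carrier J. coset J M a \<in> K}" "y \<in> carrier J"
      then show "mul J y x \<in> {a \<in> carrier J. coset J M a \<in> K}"
        using KM[of "coset J M x" "coset J M y"] by simp
    qed
    show "K = {zero (quot_alg J M)} \<or> K = carrier (quot_alg J M)"
    proof (cases "I = carrier J")
      case True
      then have "coset J M ` carrier J \<subseteq> K" using I_def by blast
      then show ?thesis using Ksub by simp
    next
      case False
      then have "I \<subseteq> M" using Mmax Iid by blast
      have "K \<subseteq> {zero (quot_alg J M)}"
      proof
        fix X assume "X \<in> K"
        then obtain a where a: "a \<in> carrier J" "X = coset J M a" using Ksub by blast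
        then have "a \<in> M" using \<open>I \<subseteq> M\<close> \<open>X \<in> K\<close> I_def by blast
        then show "X \<in> {zero (quot_alg J M)}" using a coset_zero_iff by simp
      qed
      then show ?thesis using K0 by blast
    qed
  qed
  have qmap': "\<forall>x\<in>carrier J. quot_map J M d (coset J M x) = coset J M (d x)" using qmap by blast
  show ?thesis using Mid Mprop Mmax resp qmap' qdiv qjord qsimple by (intro conjI)
qed


end
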